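(* Let $G$ be a graph with chromatic number $\chi(G)$, and suppose $G$ has a proper coloring with $\chi(G)$ color classes $V_1,\ldots,V_{\chi(G)}$, where $V_i=\{v_{i,1},v_{i,2},\ldots,v_{i,n(i)}\}$, such that for each vertex $v_{i,j}$ there is a subset $X_{i,j}\subseteq V(G)\setminus V_i$ with $N_G(v_{i,j})\subseteq X_{i,j}$, satisfying: (i) for each $i$ there is $k(i)\in\{1,\ldots,n(i)\}$ with $X_{i,1}\supseteq X_{i,2}\supseteq\cdots\supseteq X_{i,k(i)}$ and $X_{i,k(i)+1}\subseteq X_{i,k(i)+2}\subseteq\cdots\subseteq X_{i,n(i)}$ (when $k(i)=n(i)$ only the first chain is required); (ii) for any two distinct nonadjacent vertices $v_{i,s}$ and $v_{j,t}$ of $G$, either $v_{i,s}\notin X_{j,t}$ or $v_{j,t}\notin X_{i,s}$. Then $\operatorname{box}(G)\le\chi(G)$.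
   Context: All graphs are finite, simple and undirected. $N_G(v)$ is the set of neighbors of $v$ in $G$. A box in $\mathbb{R}^k$ is a Cartesian product of $k$ closed intervals of the real line. The boxicity $\operatorname{box}(G)$ of a graph $G$ is the minimum nonnegative integer $k$ such that $G$ is isomorphic to the intersection graph of a family of boxes in $\mathbb{R}^k$. $\chi(G)$ is the chromatic number of $G$; a proper coloring with $k$ colors partitions $V(G)$ into $k$ independent sets called color classes. *)

theory Defs
  imports Complex_Main
begin

definition graph :: "'a set \<Rightarrow> ('a \<Rightarrow> 'a \<Rightarrow> bool) \<Rightarrow> bool" where
  "graph V E \<longleftrightarrow> finite V \<and> (\<forall>u v. E u v \<longrightarrow> u \<in> V \<and> v \<in> V \<and> u \<noteq> v \<and> E v u)"

definition nbhd :: "'a set \<Rightarrow> ('a \<Rightarrow> 'a \<Rightarrow> bool) \<Rightarrow> 'a \<Rightarrow> 'a set" where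
  "nbhd V E v = {u \<in> V. E v u}"

definition proper_coloring :: "'a set \<Rightarrow> ('a \<Rightarrow> 'a \<Rightarrow> bool) \<Rightarrow> ('a \<Rightarrow> nat) \<Rightarrow> nat \<Rightarrow> bool" where
  "proper_coloring V E c k \<longleftrightarrow> (\<forall>v\<in>V. c v < k) \<and> (\<forall>u\<in>V. \<forall>v\<in>V. E u v \<longrightarrow> c u \<noteq> c v)"

definition chromatic_number :: "'a set \<Rightarrow> ('a \<Rightarrow> 'a \<Rightarrow> bool) \<Rightarrow> nat" where
  "chromatic_number V E = (LEAST k. \<exists>c. proper_coloring V E c k)"

text \<open>A box representation in R^k: vertex v gets the box
  \<Prod>_{i<k} [l v i, r v i]; G is isomorphic (via v \<mapsto> its box) to the
  intersection graph of the family of boxes.\<close>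
definition box_rep :: "'a set \<Rightarrow> ('a \<Rightarrow> 'a \<Rightarrow> bool) \<Rightarrow> nat \<Rightarrow> ('a \<Rightarrow> nat \<Rightarrow> real) \<Rightarrow> ('a \<Rightarrow> nat \<Rightarrow> real) \<Rightarrow> bool" where
  "box_rep V E k l r \<longleftrightarrow>
     (\<forall>v\<in>V. \<forall>i<k. l v i \<le> r v i) \<and>
     (\<forall>u\<in>V. \<forall>v\<in>V. u \<noteq> v \<longrightarrow>
        (E u v \<longleftrightarrow> (\<forall>i<k. max (l u i) (l v i) \<le> min (r u i) (r v i))))"

definition boxicity :: "'a set \<Rightarrow> ('a \<Rightarrow> 'a \<Rightarrow> bool) \<Rightarrow> nat" where
  "boxicity V E = (LEAST k. \<exists>l r. box_rep V E k l r)"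

end

theory Submission
  imports Defs
begin

theorem theorem3p1:
  fixes V :: "'a set" and E :: "'a \<Rightarrow> 'a \<Rightarrow> bool"
    and c :: "'a \<Rightarrow> nat" and ord :: "nat \<Rightarrow> 'a list" and X :: "'a \<Rightarrow> 'a set"
  assumes G: "graph V E"
    and col: "proper_coloring V E c (chromatic_number V E)"
    and ord: "\<forall>i < chromatic_number V E. distinct (ord i) \<and> set (ord i) = {v \<in> V. c v = i}"
    and Xsub: "\<forall>v\<in>V. X v \<subseteq> V - {u \<in> V. c u = c v}"
    and Nsub: "\<forall>v\<in>V. nbhd V E v \<subseteq> X v"
    and chains: "\<forall>i < chromatic_number V E. \<exists>k. 1 \<le> k \<and> k \<le> length (ord i) \<and>
        (\<forall>a b. a \<le> b \<and> b < k \<longrightarrow> X (ord i ! b) \<subseteq> X (ord i ! a)) \<and>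
        (\<forall>a b. k \<le> a \<and> a \<le> b \<and> b < length (ord i) \<longrightarrow> X (ord i ! a) \<subseteq> X (ord i ! b))"
    and cond2: "\<forall>u\<in>V. \<forall>w\<in>V. u \<noteq> w \<and> \<not> E u w \<longrightarrow> u \<notin> X w \<or> w \<notin> X u"
  shows "boxicity V E \<le> chromatic_number V E"
proof -
  define n where "n = chromatic_number V E"
  define idx where "idx i v = (THE a. a < length (ord i) \<and> ord i ! a = v)" for i v
  define K where "K i = (SOME k. 1 \<le> k \<and> k \<le> length (ord i) \<and>
        (\<forall>a b. a \<le> b \<and> b < k \<longrightarrow> X (ord i ! b) \<subseteq> X (ord i ! a)) \<and>
        (\<forall>a b. k \<le> a \<and> a \<le> b \<and> b < length (ord i) \<longrightarrow> X (ord i ! a) \<subseteq> X (ord i ! b)))" for i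
  define P where "P i v = (if idx i v < K i then - real (idx i v) else real (length (ord i)) - real (idx i v))" for i v
  define S where "S i w = P i ` {x \<in> V. c x = i \<and> w \<in> X x} \<union> {1/2}" for i w
  define l where "l w i = (if c w = i then P i w else Min (S i w))" for w i
  define r where "r w i = (if c w = i then P i w else Max (S i w))" for w i
  have fin: "finite V" using G by (simp add: graph_def)
  have Sfin: "finite (S i w)" "1/2 \<in> S i w" for i w using fin by (auto simp: S_def)
  have Sne: "S i w \<noteq> {}" for i w using Sfin(2) by blast
  have K: "1 \<le> K i \<and> K i \<le> length (ord i) \<and>
        (\<forall>a b. a \<le> b \<and> b < K i \<longrightarrow> X (ord i ! b) \<subseteq> X (ord i ! a)) \<and>
        (\<forall>a b. K i \<le> a \<and> a \<le> b \<and> b < length (ord i) \<longrightarrow> X (ord i ! a) \<subseteq> X (ord i ! b))"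
    if "i < n" for i
    unfolding K_def apply (rule someI_ex) using chains that n_def by blast
  have cn: "c v < n" if "v \<in> V" for v using col that by (simp add: proper_coloring_def n_def)
  have idx: "idx (c v) v < length (ord (c v)) \<and> ord (c v) ! idx (c v) v = v" if "v \<in> V" for v
  proof -
    have d: "distinct (ord (c v))" and s: "v \<in> set (ord (c v))"
      using ord cn[OF that] that n_def by auto
    obtain a where a: "a < length (ord (c v))" "ord (c v) ! a = v" using s by (auto simp: in_set_conv_nth)
    have "\<exists>!a. a < length (ord (c v)) \<and> ord (c v) ! a = v"
    proof (rule ex1I[of _ a])
      show "a < length (ord (c v)) \<and> ord (c v) ! a = v" using a by simp
    next
      fix y assume "y < length (ord (c v)) \<and> ord (c v) ! y = v"
      then show "y = a" using a d nth_eq_iff_index_eq by metis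
    qed
    then show ?thesis unfolding idx_def by (rule theI')
  qed
  have Pinj: "u = v" if "u \<in> V" "v \<in> V" "c u = c v" "P (c u) u = P (c v) v" for u v
  proof -
    define i where "i = c u"
    have iv: "c v = i" using that(3) i_def by simp
    define a where "a = idx i u"
    define b where "b = idx i v"
    have a: "a < length (ord i)" "ord i ! a = u" using idx[OF that(1)] a_def i_def by auto
    have b: "b < length (ord i)" "ord i ! b = v" using idx[OF that(2)] b_def iv by auto
    have e: "(if a < K i then - real a else real (length (ord i)) - real a) =
             (if b < K i then - real b else real (length (ord i)) - real b)"
      using that(4) iv unfolding P_def a_def b_def i_def by simp
    have "a = b"
    proof (cases "a < K i"; cases "b < K i")
    qed (use e a(1) b(1) in simp_all)
    then show ?thesis using a b by simp
  qed
  have dimb: "(max (l u i) (l v i) \<le> min (r u i) (r v i)) \<longleftrightarrow> v \<in> X u"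
    if "u \<in> V" "v \<in> V" "c u = i" "c v \<noteq> i" for u v i
  proof -
    have i: "i < n" using cn that by auto
    have lv: "l v i = Min (S i v)" "r v i = Max (S i v)" using that by (auto simp: l_def r_def)
    have lu: "l u i = P i u" "r u i = P i u" using that by (auto simp: l_def r_def)
    have "Min (S i v) \<le> 1/2" "1/2 \<le> Max (S i v)" using Min_le[OF Sfin(1) Sfin(2)] Max_ge[OF Sfin(1) Sfin(2)] by simp_all
    then have "Min (S i v) \<le> Max (S i v)" by linarith
    then have eq: "(max (l u i) (l v i) \<le> min (r u i) (r v i)) \<longleftrightarrow>
        Min (S i v) \<le> P i u \<and> P i u \<le> Max (S i v)" unfolding lv lu by linarith
    show ?thesis unfolding eq
    proof
      assume "v \<in> X u"
      then have "P i u \<in> S i v" using that by (auto simp: S_def)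
      then show "Min (S i v) \<le> P i u \<and> P i u \<le> Max (S i v)" using Sfin by auto
    next
      assume h: "Min (S i v) \<le> P i u \<and> P i u \<le> Max (S i v)"
      define a where "a = idx i u"
      have a: "a < length (ord i)" "ord i ! a = u" using idx[OF that(1)] that a_def by auto
      have Ki: "1 \<le> K i \<and> K i \<le> length (ord i) \<and>
        (\<forall>a b. a \<le> b \<and> b < K i \<longrightarrow> X (ord i ! b) \<subseteq> X (ord i ! a)) \<and>
        (\<forall>a b. K i \<le> a \<and> a \<le> b \<and> b < length (ord i) \<longrightarrow> X (ord i ! a) \<subseteq> X (ord i ! b))"
        using K[OF i] .
      show "v \<in> X u"
      proof (cases "a < K i")
        case True
        then have pu: "P i u = - real a" by (simp add: P_def a_def)
        have "Min (S i v) \<in> S i v" using Sfin Sne by simp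
        moreover have "Min (S i v) \<noteq> 1/2" using h pu by auto
        ultimately obtain x where x: "x \<in> V" "c x = i" "v \<in> X x" "Min (S i v) = P i x"
          by (auto simp: S_def)
        define b where "b = idx i x"
        have b: "b < length (ord i)" "ord i ! b = x" using idx[OF x(1)] x b_def by auto
        have "P i x \<le> - real a" using h pu x by auto
        then have "b < K i \<and> a \<le> b" using b(1) unfolding P_def b_def[symmetric]
          by (auto split: if_splits)
        then have "X (ord i ! b) \<subseteq> X (ord i ! a)" using Ki by blast
        then have "X x \<subseteq> X u" using a b by simp
        then show ?thesis using x by auto
      next
        case False
        then have pu: "P i u = real (length (ord i)) - real a" by (simp add: P_def a_def)
        have "Max (S i v) \<in> S i v" using Sfin Sne by simp
        moreover have "Max (S i v) \<noteq> 1/2" using h pu a by auto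
        ultimately obtain x where x: "x \<in> V" "c x = i" "v \<in> X x" "Max (S i v) = P i x"
          by (auto simp: S_def)
        define b where "b = idx i x"
        have b: "b < length (ord i)" "ord i ! b = x" using idx[OF x(1)] x b_def by auto
        have "P i x \<ge> real (length (ord i)) - real a" using h pu x by auto
        then have "K i \<le> b \<and> b \<le> a" using b(1) a(1) False unfolding P_def b_def[symmetric]
          by (auto split: if_splits)
        then have "X (ord i ! b) \<subseteq> X (ord i ! a)" using Ki a(1) by blast
        then have "X x \<subseteq> X u" using a b by simp
        then show ?thesis using x by auto
      qed
    qed
  qed
  have dimc: "max (l u i) (l v i) \<le> min (r u i) (r v i)"
    if "c u \<noteq> i" "c v \<noteq> i" for u v i
  proof -
    have "Min (S i u) \<le> 1/2" "Min (S i v) \<le> 1/2" "1/2 \<le> Max (S i u)" "1/2 \<le> Max (S i v)"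
      using Min_le[OF Sfin(1) Sfin(2)] Max_ge[OF Sfin(1) Sfin(2)] by auto
    then show ?thesis using that by (simp add: l_def r_def)
  qed
  have dima: "\<not> (max (l u i) (l v i) \<le> min (r u i) (r v i))"
    if "u \<in> V" "v \<in> V" "c u = i" "c v = i" "u \<noteq> v" for u v i
  proof -
    have "P i u \<noteq> P i v" using Pinj[of u v] that by auto
    then show ?thesis using that by (simp add: l_def r_def)
  qed
  have Esym: "E u v \<Longrightarrow> E v u" for u v using G by (simp add: graph_def)
  have EX: "E u v \<Longrightarrow> u \<in> V \<Longrightarrow> v \<in> X u" for u v
    using Nsub G by (auto simp: nbhd_def graph_def)
  have Ec: "E u v \<Longrightarrow> u \<in> V \<Longrightarrow> v \<in> V \<Longrightarrow> c u \<noteq> c v" for u v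
    using col by (simp add: proper_coloring_def)
  have br: "box_rep V E n l r"
    unfolding box_rep_def
  proof (intro conjI ballI allI impI)
    fix v i assume "v \<in> V" "i < n"
    show "l v i \<le> r v i"
    proof -
      have "Min (S i v) \<le> 1/2" "1/2 \<le> Max (S i v)" using Min_le[OF Sfin(1) Sfin(2)] Max_ge[OF Sfin(1) Sfin(2)] by simp_all
      then show ?thesis by (simp add: l_def r_def)
    qed
  next
    fix u v assume uv: "u \<in> V" "v \<in> V" "u \<noteq> v"
    show "E u v \<longleftrightarrow> (\<forall>i<n. max (l u i) (l v i) \<le> min (r u i) (r v i))"
    proof
      assume e: "E u v"
      show "\<forall>i<n. max (l u i) (l v i) \<le> min (r u i) (r v i)"
      proof (intro allI impI)
        fix i assume "i < n"
        show "max (l u i) (l v i) \<le> min (r u i) (r v i)"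
        proof (cases "c u = i")
          case True
          then show ?thesis using dimb[OF uv(1,2) True] Ec[OF e uv(1,2)] EX[OF e uv(1)] by auto
        next
          case False
          show ?thesis
          proof (cases "c v = i")
            case True
            then have "max (l v i) (l u i) \<le> min (r v i) (r u i)"
              using dimb[OF uv(2,1) True False] EX[OF Esym[OF e] uv(2)] by auto
            then show ?thesis by linarith
          next
            case False2: False
            show ?thesis using dimc[OF False False2] .
          qed
        qed
      qed
    next
      assume all: "\<forall>i<n. max (l u i) (l v i) \<le> min (r u i) (r v i)"
      show "E u v"
      proof (rule ccontr)
        assume ne: "\<not> E u v"
        show False
        proof (cases "c u = c v")
          case True
          then show False using dima[OF uv(1,2) refl True[symmetric] uv(3)] all cn[OF uv(1)] by auto
        next
          case False
          have "u \<notin> X v \<or> v \<notin> X u" using cond2 uv ne by blast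
          then show False
          proof
            assume "u \<notin> X v"
            then have "\<not> (max (l v (c v)) (l u (c v)) \<le> min (r v (c v)) (r u (c v)))"
              using dimb[OF uv(2,1) refl] False by auto
            moreover have "max (l u (c v)) (l v (c v)) \<le> min (r u (c v)) (r v (c v))"
              using all cn[OF uv(2)] by blast
            ultimately show False by linarith
          next
            assume "v \<notin> X u"
            then show False using dimb[OF uv(1,2) refl] False all cn[OF uv(1)] by auto
          qed
        qed
      qed
    qed
  qed
  show ?thesis unfolding boxicity_def n_def[symmetric]
    by (rule Least_le) (use br in blast)
qed

end
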